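(* Let $n=n_{obs}+n_{mis}$ with $n_{obs}\ge2$, $n_{mis}\ge1$. Let $Y_1,\dots,Y_{n_{obs}}$ be i.i.d. $N(\mu,\sigma^2)$, with $\bar Y_{obs}$ their mean and $CSS=\sum_{i=1}^{n_{obs}}(Y_i-\bar Y_{obs})^2$. Fix a real constant $c_M$ with $n_{obs}-1+c_M>0$ and let $\hat\mu_{obs,M}=\bar Y_{obs}$, $\hat\sigma^2_{obs,M}=CSS/(n_{obs}-1+c_M)$. ML(-like) multiple imputation with $D\ge1$ imputations is defined as follows: for each $d=1,\dots,D$ independently, draw $Y_{imp,i,d}=\hat\mu_{obs,M}+\hat\sigma_{obs,M}Z_{imp,i,d}$ for $i=n_{obs}+1,\dots,n$ with $Z_{imp,i,d}$ i.i.d. $N(0,1)$ independent of the data, and let $\hat\mu_{SI,d}$ and $\hat\sigma^2_{SI,d}$ be the sample mean and sample variance (divisor $n-1$) of the $n$ values $Y_1,\dots,Y_{n_{obs}},Y_{imp,n_{obs}+1,d},\dots,Y_{imp,n,d}$. Let $\hat\mu_{MI,M}=\frac1D\sum_d\hat\mu_{SI,d}$ and $\hat\sigma^2_{MI,M}=\frac1D\sum_d\hat\sigma^2_{SI,d}$. Then for every $D\ge1$, $$E(\hat\mu_{MI,M})=\mu,\qquad E(\hat\sigma^2_{MI,M})-\sigma^2=-\sigma^2\frac{n_{mis}(c_M n+n_{obs}-1)}{(n-1)n(c_M+n_{obs}-1)}.$$ *)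

theory Defs
  imports "HOL-Probability.Probability"
begin

text \<open>Observed data Y i (i < nobs); standard normal noise Z i d (nobs \<le> i < n, d < D).
  Indices are 0-based.\<close>

definition ybar_obs :: "nat \<Rightarrow> (nat \<Rightarrow> 'a \<Rightarrow> real) \<Rightarrow> 'a \<Rightarrow> real" where
  "ybar_obs nobs Y \<omega> = (\<Sum>i<nobs. Y i \<omega>) / real nobs"

definition CSS :: "nat \<Rightarrow> (nat \<Rightarrow> 'a \<Rightarrow> real) \<Rightarrow> 'a \<Rightarrow> real" where
  "CSS nobs Y \<omega> = (\<Sum>i<nobs. (Y i \<omega> - ybar_obs nobs Y \<omega>)\<^sup>2)"

definition sigma2_obs_M :: "nat \<Rightarrow> real \<Rightarrow> (nat \<Rightarrow> 'a \<Rightarrow> real) \<Rightarrow> 'a \<Rightarrow> real" where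
  "sigma2_obs_M nobs cM Y \<omega> = CSS nobs Y \<omega> / (real nobs - 1 + cM)"

definition Ycomp :: "nat \<Rightarrow> real \<Rightarrow> (nat \<Rightarrow> 'a \<Rightarrow> real) \<Rightarrow> (nat \<Rightarrow> nat \<Rightarrow> 'a \<Rightarrow> real)
    \<Rightarrow> nat \<Rightarrow> nat \<Rightarrow> 'a \<Rightarrow> real" where
  "Ycomp nobs cM Y Z d i \<omega> =
     (if i < nobs then Y i \<omega>
      else ybar_obs nobs Y \<omega> + sqrt (sigma2_obs_M nobs cM Y \<omega>) * Z i d \<omega>)"

definition mu_SI :: "nat \<Rightarrow> nat \<Rightarrow> real \<Rightarrow> (nat \<Rightarrow> 'a \<Rightarrow> real) \<Rightarrow> (nat \<Rightarrow> nat \<Rightarrow> 'a \<Rightarrow> real)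
    \<Rightarrow> nat \<Rightarrow> 'a \<Rightarrow> real" where
  "mu_SI n nobs cM Y Z d \<omega> = (\<Sum>i<n. Ycomp nobs cM Y Z d i \<omega>) / real n"

definition sigma2_SI :: "nat \<Rightarrow> nat \<Rightarrow> real \<Rightarrow> (nat \<Rightarrow> 'a \<Rightarrow> real) \<Rightarrow> (nat \<Rightarrow> nat \<Rightarrow> 'a \<Rightarrow> real)
    \<Rightarrow> nat \<Rightarrow> 'a \<Rightarrow> real" where
  "sigma2_SI n nobs cM Y Z d \<omega> =
     (\<Sum>i<n. (Ycomp nobs cM Y Z d i \<omega> - mu_SI n nobs cM Y Z d \<omega>)\<^sup>2) / (real n - 1)"

definition mu_MI :: "nat \<Rightarrow> nat \<Rightarrow> nat \<Rightarrow> real \<Rightarrow> (nat \<Rightarrow> 'a \<Rightarrow> real) \<Rightarrow> (nat \<Rightarrow> nat \<Rightarrow> 'a \<Rightarrow> real)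
    \<Rightarrow> 'a \<Rightarrow> real" where
  "mu_MI D n nobs cM Y Z \<omega> = (\<Sum>d<D. mu_SI n nobs cM Y Z d \<omega>) / real D"

definition sigma2_MI :: "nat \<Rightarrow> nat \<Rightarrow> nat \<Rightarrow> real \<Rightarrow> (nat \<Rightarrow> 'a \<Rightarrow> real) \<Rightarrow> (nat \<Rightarrow> nat \<Rightarrow> 'a \<Rightarrow> real)
    \<Rightarrow> 'a \<Rightarrow> real" where
  "sigma2_MI D n nobs cM Y Z \<omega> = (\<Sum>d<D. sigma2_SI n nobs cM Y Z d \<omega>) / real D"

definition joint_family :: "(nat \<Rightarrow> 'a \<Rightarrow> real) \<Rightarrow> (nat \<Rightarrow> nat \<Rightarrow> 'a \<Rightarrow> real)
    \<Rightarrow> nat + nat \<times> nat \<Rightarrow> 'a \<Rightarrow> real" where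
  "joint_family Y Z k = (case k of Inl i \<Rightarrow> Y i | Inr (i, d) \<Rightarrow> Z i d)"

end

theory Submission
  imports Defs
begin

lemma split_lessThan: "nobs \<le> n \<Longrightarrow> (\<Sum>i<n. f i) = (\<Sum>i<nobs. f i) + (\<Sum>i\<in>{nobs..<n}. f i)"
  for f :: "nat \<Rightarrow> real"
proof -
  assume "nobs \<le> n"
  then have e: "{..<n} = {..<nobs} \<union> {nobs..<n}" by auto
  have "sum f ({..<nobs} \<union> {nobs..<n}) = sum f {..<nobs} + sum f {nobs..<n}"
    by (rule sum.union_disjoint) auto
  then show ?thesis using e by metis
qed

lemma comp_identities:
  fixes y z x :: "nat \<Rightarrow> real" and nobs nmis n :: nat and s yb :: real
  assumes pos: "nobs > 0" and n: "n = nobs + nmis"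
    and yb: "yb = (\<Sum>i<nobs. y i) / real nobs"
    and x: "\<And>i. x i = (if i < nobs then y i else yb + s * z i)"
  shows "(\<Sum>i<n. x i) / real n = yb + s * (\<Sum>i\<in>{nobs..<n}. z i) / real n"
    and "(\<Sum>i<n. (x i - (\<Sum>j<n. x j) / real n)\<^sup>2) = (\<Sum>i<nobs. (y i - yb)\<^sup>2)
          + s\<^sup>2 * ((\<Sum>i\<in>{nobs..<n}. (z i)\<^sup>2) - (\<Sum>i\<in>{nobs..<n}. z i)\<^sup>2 / real n)"
proof -
  let ?W = "\<Sum>i\<in>{nobs..<n}. z i"
  have le: "nobs \<le> n" using n by simp
  have npos: "real n > 0" using pos n by simp
  have sy: "(\<Sum>i<nobs. y i) = real nobs * yb" using yb pos by simp
  have sumx: "(\<Sum>i<n. x i) = real n * yb + s * ?W"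
  proof -
    have "(\<Sum>i<n. x i) = (\<Sum>i<nobs. x i) + (\<Sum>i\<in>{nobs..<n}. x i)" by (rule split_lessThan[OF le])
    also have "(\<Sum>i<nobs. x i) = (\<Sum>i<nobs. y i)" by (intro sum.cong) (auto simp: x)
    also have "(\<Sum>i\<in>{nobs..<n}. x i) = (\<Sum>i\<in>{nobs..<n}. yb + s * z i)" by (intro sum.cong) (auto simp: x)
    also have "\<dots> = real nmis * yb + s * ?W" using n by (simp add: sum.distrib sum_distrib_left)
    finally show ?thesis using sy n by (simp add: algebra_simps)
  qed
  show m: "(\<Sum>i<n. x i) / real n = yb + s * ?W / real n"
    using npos sumx by (simp add: field_simps)
  define t where "t = s * ?W / real n"
  have "(\<Sum>i<n. (x i - (\<Sum>j<n. x j) / real n)\<^sup>2) = (\<Sum>i<n. ((x i - yb) - t)\<^sup>2)"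
    by (rule sum.cong[OF refl]) (simp add: m t_def diff_diff_eq)
  also have "\<dots> = (\<Sum>i<n. (x i - yb)\<^sup>2) - 2 * t * (\<Sum>i<n. (x i - yb)) + real n * t\<^sup>2"
  proof -
    have "\<And>i. ((x i - yb) - t)\<^sup>2 = (x i - yb)\<^sup>2 - 2 * t * (x i - yb) + t\<^sup>2"
      by (simp add: power2_eq_square algebra_simps)
    then have "(\<Sum>i<n. ((x i - yb) - t)\<^sup>2) = (\<Sum>i<n. (x i - yb)\<^sup>2 - 2 * t * (x i - yb) + t\<^sup>2)"
      by simp
    also have "\<dots> = (\<Sum>i<n. (x i - yb)\<^sup>2) - (\<Sum>i<n. 2 * t * (x i - yb)) + (\<Sum>i<n. t\<^sup>2)"
      by (simp only: sum.distrib sum_subtractf)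
    also have "(\<Sum>i<n. 2 * t * (x i - yb)) = 2 * t * (\<Sum>i<n. (x i - yb))"
      by (rule sum_distrib_left[symmetric])
    finally show ?thesis by simp

  qed
  also have "(\<Sum>i<n. (x i - yb)) = s * ?W"
    using sumx by (simp add: sum_subtractf)
  also have "(\<Sum>i<n. (x i - yb)\<^sup>2) = (\<Sum>i<nobs. (y i - yb)\<^sup>2) + s\<^sup>2 * (\<Sum>i\<in>{nobs..<n}. (z i)\<^sup>2)"
  proof -
    have "(\<Sum>i<n. (x i - yb)\<^sup>2) = (\<Sum>i<nobs. (x i - yb)\<^sup>2) + (\<Sum>i\<in>{nobs..<n}. (x i - yb)\<^sup>2)"
      by (rule split_lessThan[OF le])
    also have "(\<Sum>i<nobs. (x i - yb)\<^sup>2) = (\<Sum>i<nobs. (y i - yb)\<^sup>2)" by (intro sum.cong) (auto simp: x)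
    also have "(\<Sum>i\<in>{nobs..<n}. (x i - yb)\<^sup>2) = (\<Sum>i\<in>{nobs..<n}. s\<^sup>2 * (z i)\<^sup>2)"
      by (intro sum.cong) (auto simp: x power_mult_distrib)
    finally show ?thesis by (simp add: sum_distrib_left)
  qed
  finally show "(\<Sum>i<n. (x i - (\<Sum>j<n. x j) / real n)\<^sup>2) = (\<Sum>i<nobs. (y i - yb)\<^sup>2)
          + s\<^sup>2 * ((\<Sum>i\<in>{nobs..<n}. (z i)\<^sup>2) - ?W\<^sup>2 / real n)"
    unfolding t_def using npos by (simp add: field_simps power2_eq_square)
qed


lemma css_identity:
  fixes y :: "nat \<Rightarrow> real" and m :: nat
  assumes "m > 0"
  shows "(\<Sum>i<m. (y i - (\<Sum>j<m. y j) / real m)\<^sup>2)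
     = (\<Sum>i<m. y i * y i) - (\<Sum>i<m. \<Sum>j<m. y i * y j) / real m"
proof -
  define S where "S = (\<Sum>j<m. y j)"
  define a where "a = S / real m"
  have "\<And>i. (y i - a)\<^sup>2 = y i * y i - 2 * a * y i + a\<^sup>2"
    by (simp add: power2_eq_square algebra_simps)
  then have "(\<Sum>i<m. (y i - a)\<^sup>2) = (\<Sum>i<m. y i * y i - 2 * a * y i + a\<^sup>2)" by simp
  also have "\<dots> = (\<Sum>i<m. y i * y i) - (\<Sum>i<m. 2 * a * y i) + (\<Sum>i<m. a\<^sup>2)"
    by (simp only: sum.distrib sum_subtractf)
  also have "(\<Sum>i<m. 2 * a * y i) = 2 * a * S"
    unfolding S_def by (rule sum_distrib_left[symmetric])
  also have "(\<Sum>i<m. \<Sum>j<m. y i * y j) = S * S"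
    unfolding S_def by (simp add: sum_product)
  ultimately show ?thesis
    using assms unfolding a_def S_def[symmetric]
    by (simp add: field_simps power2_eq_square)
qed

lemma sq_sum_double: "(\<Sum>i\<in>S. z i)\<^sup>2 = (\<Sum>i\<in>S. \<Sum>j\<in>S. z i * z j)" for z :: "nat \<Rightarrow> real"
  by (simp add: power2_eq_square sum_product)

lemma sqrt_le_1_plus: "0 \<le> x \<Longrightarrow> sqrt x \<le> 1 + x"
  by (rule power2_le_imp_le) (auto simp: power2_eq_square algebra_simps)

lemma (in prob_space) indep_fun_integral:
  fixes X :: "'i \<Rightarrow> 'a \<Rightarrow> real" and F G :: "'a \<Rightarrow> real"
  assumes ind: "indep_vars (\<lambda>_. borel) X I" and AB: "A \<inter> B = {}" "A \<subseteq> I" "B \<subseteq> I"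
    and f: "f \<in> borel_measurable (PiM A (\<lambda>_. borel))"
    and g: "g \<in> borel_measurable (PiM B (\<lambda>_. borel))"
    and F: "\<And>\<omega>. \<omega> \<in> space M \<Longrightarrow> F \<omega> = f (\<lambda>i\<in>A. X i \<omega>)"
    and G: "\<And>\<omega>. \<omega> \<in> space M \<Longrightarrow> G \<omega> = g (\<lambda>i\<in>B. X i \<omega>)"
    and iF: "integrable M F" and iG: "integrable M G"
  shows "integrable M (\<lambda>\<omega>. F \<omega> * G \<omega>) \<and> expectation (\<lambda>\<omega>. F \<omega> * G \<omega>) = expectation F * expectation G"
proof -
  have iv: "indep_var borel (f \<circ> (\<lambda>\<omega>. \<lambda>i\<in>A. X i \<omega>)) borel (g \<circ> (\<lambda>\<omega>. \<lambda>i\<in>B. X i \<omega>))"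
    by (rule indep_var_compose[OF indep_var_restrict[OF ind AB] f g])
  have iF': "integrable M (f \<circ> (\<lambda>\<omega>. \<lambda>i\<in>A. X i \<omega>))"
    using iF by (subst Bochner_Integration.integrable_cong[OF refl]) (auto simp: F)
  have iG': "integrable M (g \<circ> (\<lambda>\<omega>. \<lambda>i\<in>B. X i \<omega>))"
    using iG by (subst Bochner_Integration.integrable_cong[OF refl]) (auto simp: G)
  have 1: "integrable M (\<lambda>\<omega>. (f \<circ> (\<lambda>\<omega>. \<lambda>i\<in>A. X i \<omega>)) \<omega> * (g \<circ> (\<lambda>\<omega>. \<lambda>i\<in>B. X i \<omega>)) \<omega>)"
    by (rule indep_var_integrable[OF iv iF' iG'])
  have 2: "expectation (\<lambda>\<omega>. (f \<circ> (\<lambda>\<omega>. \<lambda>i\<in>A. X i \<omega>)) \<omega> * (g \<circ> (\<lambda>\<omega>. \<lambda>i\<in>B. X i \<omega>)) \<omega>)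
     = expectation (f \<circ> (\<lambda>\<omega>. \<lambda>i\<in>A. X i \<omega>)) * expectation (g \<circ> (\<lambda>\<omega>. \<lambda>i\<in>B. X i \<omega>))"
    by (rule indep_var_lebesgue_integral[OF iv iF' iG'])
  show ?thesis
  proof
    show "integrable M (\<lambda>\<omega>. F \<omega> * G \<omega>)"
      using 1 by (subst Bochner_Integration.integrable_cong[OF refl]) (auto simp: F G)
    have "expectation (\<lambda>\<omega>. F \<omega> * G \<omega>) = expectation (\<lambda>\<omega>. (f \<circ> (\<lambda>\<omega>. \<lambda>i\<in>A. X i \<omega>)) \<omega> * (g \<circ> (\<lambda>\<omega>. \<lambda>i\<in>B. X i \<omega>)) \<omega>)"
      by (rule Bochner_Integration.integral_cong) (auto simp: F G)
    also have "\<dots> = expectation F * expectation G" unfolding 2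
      by (intro arg_cong2[where f="(*)"] Bochner_Integration.integral_cong) (auto simp: F G)
    finally show "expectation (\<lambda>\<omega>. F \<omega> * G \<omega>) = expectation F * expectation G" .
  qed
qed

lemma (in prob_space) normal_facts:
  assumes s: "\<sigma> > 0" and D: "distributed M lborel X (\<lambda>x. ennreal (normal_density \<mu> \<sigma> x))"
  shows "integrable M X" "integrable M (\<lambda>x. (X x)\<^sup>2)" "expectation X = \<mu>"
    "expectation (\<lambda>x. (X x)\<^sup>2) = \<mu>\<^sup>2 + \<sigma>\<^sup>2"
proof -
  show iX: "integrable M X"
    by (rule distributed_integrable_var[OF D]) (auto intro: integrable_normal_moment_nz_1[OF s])
  have "integrable M (\<lambda>x. (X x - \<mu>)^2)"
    using distributed_integrable[OF D, of "\<lambda>x. (x - \<mu>)^2"] integrable_normal_moment[OF s, of \<mu> 2] by simp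
  then have i2: "integrable M (\<lambda>x. (X x - \<mu>)^2 + 2 * \<mu> * X x - \<mu>^2)"
    using iX by auto
  have eq: "(\<lambda>x. (X x)\<^sup>2) = (\<lambda>x. (X x - \<mu>)^2 + 2 * \<mu> * X x - \<mu>^2)"
    by (auto simp: power2_eq_square algebra_simps)
  show "integrable M (\<lambda>x. (X x)\<^sup>2)" using i2 eq by simp
  show eX: "expectation X = \<mu>" by (rule normal_distributed_expectation[OF s D])
  have v: "variance X = \<sigma>\<^sup>2" by (rule normal_distributed_variance[OF s D])
  show "expectation (\<lambda>x. (X x)\<^sup>2) = \<mu>\<^sup>2 + \<sigma>\<^sup>2"
    unfolding eq using i2 v eX iX \<open>integrable M (\<lambda>x. (X x - \<mu>)^2)\<close> 
    by (simp add: prob_space power2_eq_square)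
qed


lemma (in prob_space) exp_double:
  fixes X :: "nat \<Rightarrow> 'a \<Rightarrow> real" and S :: "nat set"
  assumes fin: "finite S"
    and h: "\<And>i j. i \<in> S \<Longrightarrow> j \<in> S \<Longrightarrow> integrable M (\<lambda>\<omega>. X i \<omega> * X j \<omega>)
          \<and> expectation (\<lambda>\<omega>. X i \<omega> * X j \<omega>) = a + (if i = j then b else 0)"
  shows "integrable M (\<lambda>\<omega>. \<Sum>i\<in>S. \<Sum>j\<in>S. X i \<omega> * X j \<omega>)"
    "expectation (\<lambda>\<omega>. \<Sum>i\<in>S. \<Sum>j\<in>S. X i \<omega> * X j \<omega>) = real (card S) * real (card S) * a + real (card S) * b"
    "integrable M (\<lambda>\<omega>. \<Sum>i\<in>S. X i \<omega> * X i \<omega>)"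
    "expectation (\<lambda>\<omega>. \<Sum>i\<in>S. X i \<omega> * X i \<omega>) = real (card S) * (a + b)"
proof -
  show "integrable M (\<lambda>\<omega>. \<Sum>i\<in>S. \<Sum>j\<in>S. X i \<omega> * X j \<omega>)"
    using h by auto
  show "integrable M (\<lambda>\<omega>. \<Sum>i\<in>S. X i \<omega> * X i \<omega>)"
    using h by auto
  have "expectation (\<lambda>\<omega>. \<Sum>i\<in>S. \<Sum>j\<in>S. X i \<omega> * X j \<omega>)
      = (\<Sum>i\<in>S. \<Sum>j\<in>S. expectation (\<lambda>\<omega>. X i \<omega> * X j \<omega>))"
    using h by (simp add: Bochner_Integration.integral_sum)
  also have "\<dots> = (\<Sum>i\<in>S. \<Sum>j\<in>S. a + (if i = j then b else 0))"
    using h by (intro sum.cong refl) auto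
  also have "\<dots> = real (card S) * real (card S) * a + real (card S) * b"
    using fin by (simp add: sum.distrib algebra_simps)
  finally show "expectation (\<lambda>\<omega>. \<Sum>i\<in>S. \<Sum>j\<in>S. X i \<omega> * X j \<omega>) = real (card S) * real (card S) * a + real (card S) * b" .
  have "expectation (\<lambda>\<omega>. \<Sum>i\<in>S. X i \<omega> * X i \<omega>) = (\<Sum>i\<in>S. expectation (\<lambda>\<omega>. X i \<omega> * X i \<omega>))"
    using h by (simp add: Bochner_Integration.integral_sum)
  also have "\<dots> = (\<Sum>i\<in>S. a + b)"
    using h by (intro sum.cong refl) auto
  finally show "expectation (\<lambda>\<omega>. \<Sum>i\<in>S. X i \<omega> * X i \<omega>) = real (card S) * (a + b)" by simp
qed

theorem mainTheorem3:
  fixes M :: "'a measure" and Y :: "nat \<Rightarrow> 'a \<Rightarrow> real" and Z :: "nat \<Rightarrow> nat \<Rightarrow> 'a \<Rightarrow> real"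
    and nobs nmis n D :: nat and \<mu> \<sigma> cM :: real
  assumes "prob_space M"
    and "nobs \<ge> 2" and "nmis \<ge> 1" and "n = nobs + nmis" and "D \<ge> 1"
    and "\<sigma> > 0"
    and "real nobs - 1 + cM > 0"
    and "prob_space.indep_vars M (\<lambda>_. borel) (joint_family Y Z)
           (Inl ` {..<nobs} \<union> Inr ` ({nobs..<n} \<times> {..<D}))"
    and "\<And>i. i < nobs \<Longrightarrow> distributed M lborel (Y i) (\<lambda>x. ennreal (normal_density \<mu> \<sigma> x))"
    and "\<And>i d. nobs \<le> i \<Longrightarrow> i < n \<Longrightarrow> d < D \<Longrightarrow>
           distributed M lborel (Z i d) (\<lambda>x. ennreal (std_normal_density x))"
  shows "(\<integral>\<omega>. mu_MI D n nobs cM Y Z \<omega> \<partial>M) = \<mu>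
    \<and> (\<integral>\<omega>. sigma2_MI D n nobs cM Y Z \<omega> \<partial>M) - \<sigma>\<^sup>2
        = - \<sigma>\<^sup>2 * (real nmis * (cM * real n + real nobs - 1))
            / ((real n - 1) * real n * (cM + real nobs - 1))"
proof -
  interpret P: prob_space M by fact
  have sig: "\<sigma> > 0" by fact
  define K where "K = real nobs - 1 + cM"
  have Kpos: "K > 0" using assms(7) by (simp add: K_def)
  define X where "X = joint_family Y Z"
  define I where "I = Inl ` {..<nobs} \<union> Inr ` ({nobs..<n} \<times> {..<D})"
  have ind: "P.indep_vars (\<lambda>_. borel) X I" using assms(8) by (simp add: X_def I_def)
  have memI: "\<And>x A. (Inl x \<in> Inl ` A) = (x \<in> A)" "\<And>x B. (Inr x \<in> Inr ` B) = (x \<in> B)"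
    by auto
  have XY: "\<And>i. X (Inl i) = Y i" and XZ: "\<And>i d. X (Inr (i, d)) = Z i d"
    by (simp_all add: X_def joint_family_def)
  have nobs0: "nobs > 0" and npos: "real n > 1" using assms(2,3,4) by auto
  have Yn: "integrable M (Y i) \<and> P.expectation (Y i) = \<mu>" if "i < nobs" for i
    using P.normal_facts[OF sig assms(9)[OF that]] by simp
  have YY: "integrable M (\<lambda>\<omega>. Y i \<omega> * Y j \<omega>) \<and>
      P.expectation (\<lambda>\<omega>. Y i \<omega> * Y j \<omega>) = \<mu>\<^sup>2 + (if i = j then \<sigma>\<^sup>2 else 0)"
    if ij: "i \<in> {..<nobs}" "j \<in> {..<nobs}" for i j
  proof (cases "i = j")
    case True then show ?thesis
      using P.normal_facts(2,4)[OF sig assms(9)[of i]] ij by (simp add: power2_eq_square)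
  next
    case False
    have m1: "(\<lambda>x. x (Inl i)) \<in> borel_measurable (PiM {Inl i :: nat + nat \<times> nat} (\<lambda>_. borel))"
      by measurable
    have m2: "(\<lambda>x. x (Inl j)) \<in> borel_measurable (PiM {Inl j :: nat + nat \<times> nat} (\<lambda>_. borel))"
      by measurable
    have "integrable M (\<lambda>\<omega>. Y i \<omega> * Y j \<omega>) \<and>
      P.expectation (\<lambda>\<omega>. Y i \<omega> * Y j \<omega>) = P.expectation (Y i) * P.expectation (Y j)"
      by (rule P.indep_fun_integral[OF ind _ _ _ m1 m2])
         (use ij False Yn in \<open>auto simp: I_def XY\<close>)
    then show ?thesis using False Yn ij by (simp add: power2_eq_square)
  qed
  have Zn: "integrable M (Z i d) \<and> P.expectation (Z i d) = 0"
    if "i \<in> {nobs..<n}" "d < D" for i d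
    using P.normal_facts[OF _ assms(10)[of i d]] that by simp
  have ZZ: "integrable M (\<lambda>\<omega>. Z i d \<omega> * Z j d \<omega>) \<and>
      P.expectation (\<lambda>\<omega>. Z i d \<omega> * Z j d \<omega>) = 0 + (if i = j then 1 else 0)"
    if ij: "i \<in> {nobs..<n}" "j \<in> {nobs..<n}" and d: "d < D" for i j d
  proof (cases "i = j")
    case True then show ?thesis
      using P.normal_facts(2,4)[OF _ assms(10)[of i d]] ij d by (simp add: power2_eq_square)
  next
    case False
    have m1: "(\<lambda>x. x (Inr (i, d))) \<in> borel_measurable (PiM {Inr (i, d) :: nat + nat \<times> nat} (\<lambda>_. borel))"
      by measurable
    have m2: "(\<lambda>x. x (Inr (j, d))) \<in> borel_measurable (PiM {Inr (j, d) :: nat + nat \<times> nat} (\<lambda>_. borel))"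
      by measurable
    have "integrable M (\<lambda>\<omega>. Z i d \<omega> * Z j d \<omega>) \<and>
      P.expectation (\<lambda>\<omega>. Z i d \<omega> * Z j d \<omega>) = P.expectation (Z i d) * P.expectation (Z j d)"
      by (rule P.indep_fun_integral[OF ind _ _ _ m1 m2])
         (use ij False Zn d in \<open>auto simp: I_def XZ\<close>)
    then show ?thesis using False Zn ij d by simp
  qed
  have Ceq: "CSS nobs Y \<omega> = (\<Sum>i<nobs. Y i \<omega> * Y i \<omega>) - (\<Sum>i<nobs. \<Sum>j<nobs. Y i \<omega> * Y j \<omega>) / real nobs"
    for \<omega> unfolding CSS_def ybar_obs_def by (rule css_identity[OF nobs0])
  have Cnn: "CSS nobs Y \<omega> \<ge> 0" for \<omega> unfolding CSS_def by (simp add: sum_nonneg)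
  note YD = P.exp_double[of "{..<nobs}" Y "\<mu>\<^sup>2" "\<sigma>\<^sup>2", OF _ YY, simplified]
  have Cint: "integrable M (CSS nobs Y)"
    unfolding Ceq[abs_def] using YD by auto
  have CE: "P.expectation (CSS nobs Y) = (real nobs - 1) * \<sigma>\<^sup>2"
    unfolding Ceq[abs_def] using YD nobs0 by (simp add: field_simps power2_eq_square)
  define W where "W d \<omega> = (\<Sum>i\<in>{nobs..<n}. Z i d \<omega>)" for d \<omega>
  define V where "V d \<omega> = (\<Sum>i\<in>{nobs..<n}. Z i d \<omega> * Z i d \<omega>)
      - (\<Sum>i\<in>{nobs..<n}. \<Sum>j\<in>{nobs..<n}. Z i d \<omega> * Z j d \<omega>) / real n" for d \<omega>
  have WE: "integrable M (W d) \<and> P.expectation (W d) = 0" if d: "d < D" for d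
  proof -
    have zi: "\<And>i. i \<in> {nobs..<n} \<Longrightarrow> integrable M (Z i d)" using Zn d by blast
    have "P.expectation (\<lambda>\<omega>. \<Sum>i\<in>{nobs..<n}. Z i d \<omega>) = (\<Sum>i\<in>{nobs..<n}. P.expectation (Z i d))"
      using zi by (rule Bochner_Integration.integral_sum)
    also have "\<dots> = 0" using Zn d by simp
    finally show ?thesis unfolding W_def[abs_def] using zi by auto
  qed
  have VE: "integrable M (V d) \<and> P.expectation (V d) = real nmis - real nmis / real n" if d: "d < D" for d
  proof -
    note ZD = P.exp_double[of "{nobs..<n}" "\<lambda>i. Z i d" 0 1, OF _ ZZ[OF _ _ d], simplified]
    show ?thesis unfolding V_def[abs_def] using ZD assms(4) by auto
  qed
  define s where "s \<omega> = sqrt (CSS nobs Y \<omega> / K)" for \<omega>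
  have Cmeas: "CSS nobs Y \<in> borel_measurable M" using Cint by auto
  have smeas: "s \<in> borel_measurable M"
  proof -
    have "(\<lambda>\<omega>. CSS nobs Y \<omega> / K) \<in> borel_measurable M" using Cmeas by simp
    from measurable_compose[OF this borel_measurable_sqrt] show ?thesis unfolding s_def by simp
  qed
  have sint: "integrable M s"
  proof (rule Bochner_Integration.integrable_bound[OF _ smeas])
    show "integrable M (\<lambda>\<omega>. 1 + CSS nobs Y \<omega> / K)" using Cint by auto
    show "AE \<omega> in M. norm (s \<omega>) \<le> norm (1 + CSS nobs Y \<omega> / K)"
      using Cnn Kpos by (auto simp: s_def intro!: sqrt_le_1_plus)
  qed
  define RA where "RA \<omega> = (\<lambda>k\<in>Inl ` {..<nobs}. X k \<omega>)" for \<omega>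
  define RB where "RB d \<omega> = (\<lambda>k\<in>Inr ` ({nobs..<n} \<times> {d}). X k \<omega>)" for d \<omega>
  have hY: "RA \<omega> (Inl i) = Y i \<omega>" if "i \<in> {..<nobs}" for i \<omega>
    using that by (simp add: RA_def XY)
  have hZ: "RB d \<omega> (Inr (i, d)) = Z i d \<omega>" if "i \<in> {nobs..<n}" for i d \<omega>
    using that by (simp add: RB_def XZ)
  define cssf where "cssf x = (\<Sum>i<nobs. (x (Inl i) - (\<Sum>j<nobs. x (Inl j)) / real nobs)\<^sup>2)"
    for x :: "nat + nat \<times> nat \<Rightarrow> real"
  define wf where "wf d x = (\<Sum>i\<in>{nobs..<n}. x (Inr (i,d)))" for d and x :: "nat + nat \<times> nat \<Rightarrow> real"
  define vf where "vf d x = (\<Sum>i\<in>{nobs..<n}. x (Inr (i,d)) * x (Inr (i,d)))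
      - (\<Sum>i\<in>{nobs..<n}. \<Sum>j\<in>{nobs..<n}. x (Inr (i,d)) * x (Inr (j,d))) / real n"
    for d and x :: "nat + nat \<times> nat \<Rightarrow> real"
  have CSSr: "CSS nobs Y \<omega> = cssf (RA \<omega>)" for \<omega>
  proof -
    have e1: "(\<Sum>j<nobs. RA \<omega> (Inl j)) = (\<Sum>j<nobs. Y j \<omega>)"
      by (rule sum.cong[OF refl]) (rule hY)
    show ?thesis unfolding CSS_def ybar_obs_def cssf_def e1
      by (rule sum.cong[OF refl]) (simp add: hY)
  qed
  have WR: "W d \<omega> = wf d (RB d \<omega>)" for d \<omega>
    unfolding W_def wf_def by (rule sum.cong[OF refl]) (simp add: hZ)
  have VR: "V d \<omega> = vf d (RB d \<omega>)" for d \<omega>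
  proof -
    have e1: "(\<Sum>i\<in>{nobs..<n}. RB d \<omega> (Inr (i,d)) * RB d \<omega> (Inr (i,d))) = (\<Sum>i\<in>{nobs..<n}. Z i d \<omega> * Z i d \<omega>)"
      by (rule sum.cong[OF refl]) (simp add: hZ)
    have e2: "(\<Sum>i\<in>{nobs..<n}. \<Sum>j\<in>{nobs..<n}. RB d \<omega> (Inr (i,d)) * RB d \<omega> (Inr (j,d)))
       = (\<Sum>i\<in>{nobs..<n}. \<Sum>j\<in>{nobs..<n}. Z i d \<omega> * Z j d \<omega>)"
      by (rule sum.cong[OF refl], rule sum.cong[OF refl]) (simp add: hZ)
    show ?thesis unfolding V_def vf_def e1 e2 ..
  qed
  have sW: "integrable M (\<lambda>\<omega>. s \<omega> * W d \<omega>) \<and> P.expectation (\<lambda>\<omega>. s \<omega> * W d \<omega>) = 0"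
    if d: "d < D" for d
  proof -
    have m1: "(\<lambda>x. sqrt (cssf x / K))
      \<in> borel_measurable (PiM (Inl ` {..<nobs} :: (nat + nat \<times> nat) set) (\<lambda>_. borel))"
      unfolding cssf_def by measurable
    have m2: "wf d \<in> borel_measurable (PiM (Inr ` ({nobs..<n} \<times> {d}) :: (nat + nat \<times> nat) set) (\<lambda>_. borel))"
      unfolding wf_def by measurable
    have "integrable M (\<lambda>\<omega>. s \<omega> * W d \<omega>) \<and> P.expectation (\<lambda>\<omega>. s \<omega> * W d \<omega>) = P.expectation s * P.expectation (W d)"
    proof (rule P.indep_fun_integral[OF ind _ _ _ m1 m2])
      show "Inl ` {..<nobs} \<inter> Inr ` ({nobs..<n} \<times> {d}) = {}" by auto
      show "Inl ` {..<nobs} \<subseteq> I" "Inr ` ({nobs..<n} \<times> {d}) \<subseteq> I" using d by (auto simp: I_def)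
      show "s \<omega> = sqrt (cssf (\<lambda>k\<in>Inl ` {..<nobs}. X k \<omega>) / K)" for \<omega>
        unfolding s_def CSSr RA_def ..
      show "W d \<omega> = wf d (\<lambda>k\<in>Inr ` ({nobs..<n} \<times> {d}). X k \<omega>)" for \<omega>
        unfolding WR RB_def ..
      show "integrable M s" by (rule sint)
      show "integrable M (W d)" using WE d by blast
    qed
    then show ?thesis using WE d by simp
  qed
  have CV: "integrable M (\<lambda>\<omega>. CSS nobs Y \<omega> / K * V d \<omega>) \<and>
      P.expectation (\<lambda>\<omega>. CSS nobs Y \<omega> / K * V d \<omega>) = (real nobs - 1) * \<sigma>\<^sup>2 / K * (real nmis - real nmis / real n)"
    if d: "d < D" for d
  proof -
    have m1: "(\<lambda>x. cssf x / K)
      \<in> borel_measurable (PiM (Inl ` {..<nobs} :: (nat + nat \<times> nat) set) (\<lambda>_. borel))"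
      unfolding cssf_def by measurable
    have m2: "vf d \<in> borel_measurable (PiM (Inr ` ({nobs..<n} \<times> {d}) :: (nat + nat \<times> nat) set) (\<lambda>_. borel))"
      unfolding vf_def by measurable
    have "integrable M (\<lambda>\<omega>. CSS nobs Y \<omega> / K * V d \<omega>) \<and>
      P.expectation (\<lambda>\<omega>. CSS nobs Y \<omega> / K * V d \<omega>) = P.expectation (\<lambda>\<omega>. CSS nobs Y \<omega> / K) * P.expectation (V d)"
    proof (rule P.indep_fun_integral[OF ind _ _ _ m1 m2])
      show "Inl ` {..<nobs} \<inter> Inr ` ({nobs..<n} \<times> {d}) = {}" by auto
      show "Inl ` {..<nobs} \<subseteq> I" "Inr ` ({nobs..<n} \<times> {d}) \<subseteq> I" using d by (auto simp: I_def)
      show "CSS nobs Y \<omega> / K = cssf (\<lambda>k\<in>Inl ` {..<nobs}. X k \<omega>) / K" for \<omega>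
        unfolding CSSr RA_def ..
      show "V d \<omega> = vf d (\<lambda>k\<in>Inr ` ({nobs..<n} \<times> {d}). X k \<omega>)" for \<omega>
        unfolding VR RB_def ..
      show "integrable M (\<lambda>\<omega>. CSS nobs Y \<omega> / K)" using Cint by simp
      show "integrable M (V d)" using VE d by blast
    qed
    then show ?thesis using VE d CE by simp
  qed
  have muSI: "mu_SI n nobs cM Y Z d \<omega> = ybar_obs nobs Y \<omega> + s \<omega> * W d \<omega> / real n" for d \<omega>
    unfolding mu_SI_def W_def s_def
    by (rule comp_identities(1)[OF nobs0 assms(4), where y="\<lambda>i. Y i \<omega>"])
       (simp_all add: ybar_obs_def Ycomp_def sigma2_obs_M_def K_def)
  have sigSI: "sigma2_SI n nobs cM Y Z d \<omega> = (CSS nobs Y \<omega> + CSS nobs Y \<omega> / K * V d \<omega>) / (real n - 1)" for d \<omega>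
  proof -
    have "(\<Sum>i<n. (Ycomp nobs cM Y Z d i \<omega> - (\<Sum>j<n. Ycomp nobs cM Y Z d j \<omega>) / real n)\<^sup>2)
      = (\<Sum>i<nobs. (Y i \<omega> - ybar_obs nobs Y \<omega>)\<^sup>2)
          + (s \<omega>)\<^sup>2 * ((\<Sum>i\<in>{nobs..<n}. (Z i d \<omega>)\<^sup>2) - (\<Sum>i\<in>{nobs..<n}. Z i d \<omega>)\<^sup>2 / real n)"
      unfolding s_def
      by (rule comp_identities(2)[OF nobs0 assms(4), where y="\<lambda>i. Y i \<omega>"])
         (simp_all add: ybar_obs_def Ycomp_def sigma2_obs_M_def K_def)
    also have "(s \<omega>)\<^sup>2 = CSS nobs Y \<omega> / K" unfolding s_def using Cnn Kpos by simp
    also have "(\<Sum>i\<in>{nobs..<n}. (Z i d \<omega>)\<^sup>2) - (\<Sum>i\<in>{nobs..<n}. Z i d \<omega>)\<^sup>2 / real n = V d \<omega>"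
      unfolding V_def sq_sum_double by (simp add: power2_eq_square)
    finally show ?thesis
      unfolding sigma2_SI_def mu_SI_def[symmetric] CSS_def by simp
  qed
  have ybE: "integrable M (ybar_obs nobs Y) \<and> P.expectation (ybar_obs nobs Y) = \<mu>"
  proof -
    have "P.expectation (\<lambda>\<omega>. \<Sum>i<nobs. Y i \<omega>) = (\<Sum>i<nobs. \<mu>)"
      using Yn by (simp add: Bochner_Integration.integral_sum)
    moreover have "integrable M (\<lambda>\<omega>. \<Sum>i<nobs. Y i \<omega>)"
      using Yn by (intro Bochner_Integration.integrable_sum) auto
    ultimately show ?thesis unfolding ybar_obs_def[abs_def] using nobs0 by auto
  qed
  have muE: "integrable M (mu_SI n nobs cM Y Z d) \<and> P.expectation (mu_SI n nobs cM Y Z d) = \<mu>"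
    if "d < D" for d
    unfolding muSI[abs_def] using ybE sW[OF that] by simp
  have sigE: "integrable M (sigma2_SI n nobs cM Y Z d) \<and> P.expectation (sigma2_SI n nobs cM Y Z d)
     = ((real nobs - 1) * \<sigma>\<^sup>2 + (real nobs - 1) * \<sigma>\<^sup>2 / K * (real nmis - real nmis / real n)) / (real n - 1)"
    if "d < D" for d
    unfolding sigSI[abs_def] using Cint CE CV[OF that] by simp
  have D0: "real D > 0" using assms(5) by simp
  have E1: "P.expectation (mu_MI D n nobs cM Y Z) = \<mu>"
  proof -
    have "P.expectation (mu_MI D n nobs cM Y Z) = (\<Sum>d<D. P.expectation (mu_SI n nobs cM Y Z d)) / real D"
      unfolding mu_MI_def[abs_def] using muE by (simp add: Bochner_Integration.integral_sum)
    also have "\<dots> = (\<Sum>d<D. \<mu>) / real D" using muE by simp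
    finally show ?thesis using D0 by simp
  qed
  define v where "v = ((real nobs - 1) * \<sigma>\<^sup>2 + (real nobs - 1) * \<sigma>\<^sup>2 / K * (real nmis - real nmis / real n)) / (real n - 1)"
  have E2: "P.expectation (sigma2_MI D n nobs cM Y Z) = v"
  proof -
    have "P.expectation (sigma2_MI D n nobs cM Y Z) = (\<Sum>d<D. P.expectation (sigma2_SI n nobs cM Y Z d)) / real D"
      unfolding sigma2_MI_def[abs_def] using sigE by (simp add: Bochner_Integration.integral_sum)
    also have "\<dots> = (\<Sum>d<D. v) / real D" using sigE unfolding v_def by simp
    finally show ?thesis using D0 by simp
  qed
  have fin: "v - \<sigma>\<^sup>2 = - \<sigma>\<^sup>2 * (real nmis * (cM * real n + real nobs - 1))
            / ((real n - 1) * real n * (cM + real nobs - 1))"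
  proof -
    have n: "real n = real nobs + real nmis" using assms(4) by simp
    have K2: "cM + real nobs - 1 = K" by (simp add: K_def)
    have n1: "real n - 1 \<noteq> 0" "real n \<noteq> 0" using npos by auto
    show ?thesis unfolding v_def K2 using Kpos n1
      by (simp add: field_simps) (simp add: n K_def algebra_simps power2_eq_square)
  qed
  show ?thesis using E1 E2 fin by simp
qed

end
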